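(* Let $K$ be a field, $R_1=K[x_1,\ldots,x_s]$, $R_2=K[x_{s+1},\ldots,x_n]$, $R=K[x_1,\ldots,x_n]$. Let $I$ be a monomial ideal in $R_1$ with minimal monomial generating set $\{u_1,\ldots,u_m\}$, and let $J_1,\ldots,J_m$ be monomial ideals in $R_2$. If $I$ does not have the copersistence property, then $L:=u_1J_1R+\cdots+u_mJ_mR$ does not have the copersistence property.
   Context: An ideal $I$ in a commutative Noetherian ring $R$ has the copersistence property if $\mathrm{Ass}_R(R/I^k)\supseteq\mathrm{Ass}_R(R/I^{k+1})$ for all $k\ge1$. *)

theory Defs
  imports Main "HOL-Library.Poly_Mapping"
begin

(* Polynomials over K in the variables x_0, x_1, ... : finitely supported maps
   from exponent vectors (monomials) to coefficients, with convolution product. *)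
type_synonym 'a mpoly = "(nat \<Rightarrow>\<^sub>0 nat) \<Rightarrow>\<^sub>0 'a"

(* K[x_i : i \<in> V] as a subset (subring) of the big polynomial ring *)
definition polyring :: "nat set \<Rightarrow> ('a::comm_ring_1) mpoly set" where
  "polyring V = {p. \<forall>e\<in>Poly_Mapping.keys p. Poly_Mapping.keys e \<subseteq> V}"

definition mmonom :: "(nat \<Rightarrow>\<^sub>0 nat) \<Rightarrow> ('a::comm_ring_1) mpoly" where
  "mmonom e = Poly_Mapping.single e 1"

definition mdvd :: "(nat \<Rightarrow>\<^sub>0 nat) \<Rightarrow> (nat \<Rightarrow>\<^sub>0 nat) \<Rightarrow> bool" where
  "mdvd a b \<longleftrightarrow> (\<forall>i. Poly_Mapping.lookup a i \<le> Poly_Mapping.lookup b i)"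

definition ideal_in :: "'a::comm_ring_1 set \<Rightarrow> 'a set \<Rightarrow> bool" where
  "ideal_in S I \<longleftrightarrow> I \<subseteq> S \<and> 0 \<in> I \<and> (\<forall>a\<in>I. \<forall>b\<in>I. a + b \<in> I)
      \<and> (\<forall>r\<in>S. \<forall>a\<in>I. r * a \<in> I)"

definition gen_ideal :: "'a::comm_ring_1 set \<Rightarrow> 'a set \<Rightarrow> 'a set" where
  "gen_ideal S G = \<Inter>{I. ideal_in S I \<and> G \<subseteq> I}"

definition ideal_mult :: "'a::comm_ring_1 set \<Rightarrow> 'a set \<Rightarrow> 'a set \<Rightarrow> 'a set" where
  "ideal_mult S I J = gen_ideal S {a * b | a b. a \<in> I \<and> b \<in> J}"

fun ideal_pow :: "'a::comm_ring_1 set \<Rightarrow> 'a set \<Rightarrow> nat \<Rightarrow> 'a set" where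
  "ideal_pow S I 0 = S"
| "ideal_pow S I (Suc k) = ideal_mult S (ideal_pow S I k) I"

definition prime_ideal_in :: "'a::comm_ring_1 set \<Rightarrow> 'a set \<Rightarrow> bool" where
  "prime_ideal_in S P \<longleftrightarrow> ideal_in S P \<and> P \<noteq> S
      \<and> (\<forall>a\<in>S. \<forall>b\<in>S. a * b \<in> P \<longrightarrow> a \<in> P \<or> b \<in> P)"

definition colon :: "'a::comm_ring_1 set \<Rightarrow> 'a set \<Rightarrow> 'a \<Rightarrow> 'a set" where
  "colon S I f = {r \<in> S. r * f \<in> I}"

definition Ass :: "'a::comm_ring_1 set \<Rightarrow> 'a set \<Rightarrow> 'a set set" where
  "Ass S I = {P. prime_ideal_in S P \<and> (\<exists>f\<in>S. P = colon S I f)}"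

definition copersistent :: "'a::comm_ring_1 set \<Rightarrow> 'a set \<Rightarrow> bool" where
  "copersistent S I \<longleftrightarrow> (\<forall>k\<ge>1. Ass S (ideal_pow S I (Suc k)) \<subseteq> Ass S (ideal_pow S I k))"

definition monomial_ideal :: "nat set \<Rightarrow> ('a::comm_ring_1) mpoly set \<Rightarrow> bool" where
  "monomial_ideal V I \<longleftrightarrow> (\<exists>E. (\<forall>e\<in>E. Poly_Mapping.keys e \<subseteq> V) \<and> I = gen_ideal (polyring V) (mmonom ` E))"

definition min_monomial_gens :: "nat set \<Rightarrow> ('a::comm_ring_1) mpoly set \<Rightarrow> (nat \<Rightarrow>\<^sub>0 nat) set \<Rightarrow> bool" where
  "min_monomial_gens V I G \<longleftrightarrow> (\<forall>e\<in>G. Poly_Mapping.keys e \<subseteq> V) \<and> I = gen_ideal (polyring V) (mmonom ` G)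
      \<and> (\<forall>a\<in>G. \<forall>b\<in>G. mdvd a b \<longrightarrow> a = b)"

end

theory Submission
  imports Defs
begin

definition subring :: "'a::comm_ring_1 set \<Rightarrow> bool" where
 "subring S \<longleftrightarrow> 0 \<in> S \<and> 1 \<in> S \<and> (\<forall>a\<in>S. \<forall>b\<in>S. a + b \<in> S \<and> a * b \<in> S) \<and> (\<forall>a\<in>S. - a \<in> S)"

lemma subring_polyring: "subring (polyring V :: 'a::comm_ring_1 mpoly set)"
proof -
  have add: "p + q \<in> polyring V" if "p \<in> polyring V" "q \<in> polyring V" for p q :: "'a mpoly"
    using that keys_add[of p q] unfolding polyring_def by blast
  have mult: "p * q \<in> polyring V" if "p \<in> polyring V" "q \<in> polyring V" for p q :: "'a mpoly"
  proof -
    { fix e assume "e \<in> Poly_Mapping.keys (p * q)"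
      then obtain a b where "e = a + b" "a \<in> Poly_Mapping.keys p" "b \<in> Poly_Mapping.keys q"
        using keys_mult[of p q] by blast
      then have "Poly_Mapping.keys e \<subseteq> V"
        using that keys_add[of a b] unfolding polyring_def by blast }
    then show ?thesis unfolding polyring_def by blast
  qed
  have z: "0 \<in> polyring V" by (simp add: polyring_def)
  have o: "1 \<in> polyring V" by (simp add: polyring_def)
  have n: "- p \<in> polyring V" if "p \<in> polyring V" for p :: "'a mpoly"
    using that by (simp add: polyring_def)
  show ?thesis unfolding subring_def
    using add mult z o n by blast
qed

lemma ideal_in_subset: "ideal_in S I \<Longrightarrow> I \<subseteq> S"
  by (simp add: ideal_in_def)

lemma ideal_in_mult: "ideal_in S I \<Longrightarrow> r \<in> S \<Longrightarrow> a \<in> I \<Longrightarrow> r * a \<in> I"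
  by (simp add: ideal_in_def)

lemma ideal_in_mult2: "ideal_in S I \<Longrightarrow> r \<in> S \<Longrightarrow> a \<in> I \<Longrightarrow> a * r \<in> I"
  by (metis ideal_in_mult mult.commute)

lemma ideal_in_add: "ideal_in S I \<Longrightarrow> a \<in> I \<Longrightarrow> b \<in> I \<Longrightarrow> a + b \<in> I"
  by (simp add: ideal_in_def)

lemma ideal_in_zero: "ideal_in S I \<Longrightarrow> 0 \<in> I"
  by (simp add: ideal_in_def)

lemma ideal_in_neg: "subring S \<Longrightarrow> ideal_in S I \<Longrightarrow> a \<in> I \<Longrightarrow> - a \<in> I"
  using ideal_in_mult[of S I "-1" a] by (simp add: subring_def)

lemma ideal_in_cancel: "subring S \<Longrightarrow> ideal_in S I \<Longrightarrow> a + b \<in> I \<Longrightarrow> b \<in> I \<Longrightarrow> a \<in> I"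
  using ideal_in_add[of S I "a + b" "- b"] ideal_in_neg[of S I b] by simp

lemma ideal_in_sum: "ideal_in S I \<Longrightarrow> (\<And>x. x \<in> A \<Longrightarrow> f x \<in> I) \<Longrightarrow> sum f A \<in> I"
proof (induction A rule: infinite_finite_induct)
  case (infinite A) then show ?case by (simp add: ideal_in_zero)
next
  case empty then show ?case by (simp add: ideal_in_zero)
next
  case (insert x F) then show ?case by (simp add: ideal_in_add)
qed

lemma subring_sum: "subring S \<Longrightarrow> (\<And>x. x \<in> A \<Longrightarrow> f x \<in> S) \<Longrightarrow> sum f A \<in> S"
proof (induction A rule: infinite_finite_induct)
  case (infinite A) then show ?case by (simp add: subring_def)
next
  case empty then show ?case by (simp add: subring_def)
next
  case (insert x F) then show ?case by (simp add: subring_def)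
qed

lemma subring_prod: "subring S \<Longrightarrow> (\<And>x. x \<in> A \<Longrightarrow> f x \<in> S) \<Longrightarrow> prod f A \<in> S"
proof (induction A rule: infinite_finite_induct)
  case (infinite A) then show ?case by (simp add: subring_def)
next
  case empty then show ?case by (simp add: subring_def)
next
  case (insert x F) then show ?case by (simp add: subring_def)
qed

lemma ideal_self: "subring S \<Longrightarrow> ideal_in S S"
  by (simp add: ideal_in_def subring_def)

lemma gen_ideal_ideal:
  assumes "subring S" "G \<subseteq> S"
  shows "ideal_in S (gen_ideal S G)"
proof -
  have ne: "S \<in> {I. ideal_in S I \<and> G \<subseteq> I}" using assms ideal_self by blast
  let ?F = "{I. ideal_in S I \<and> G \<subseteq> I}"
  have 1: "\<Inter> ?F \<subseteq> S" using ne by blast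
  have 2: "0 \<in> \<Inter> ?F" by (auto simp: ideal_in_def)
  have 3: "\<forall>a\<in>\<Inter> ?F. \<forall>b\<in>\<Inter> ?F. a + b \<in> \<Inter> ?F" by (auto simp: ideal_in_def)
  have 4: "\<forall>r\<in>S. \<forall>a\<in>\<Inter> ?F. r * a \<in> \<Inter> ?F" by (auto simp: ideal_in_def)
  show ?thesis unfolding gen_ideal_def using 1 2 3 4 by (simp only: ideal_in_def)
qed

lemma gen_ideal_gens: "G \<subseteq> gen_ideal S G"
  by (auto simp: gen_ideal_def)

lemma gen_ideal_least: "ideal_in S A \<Longrightarrow> G \<subseteq> A \<Longrightarrow> gen_ideal S G \<subseteq> A"
  by (auto simp: gen_ideal_def)

lemma ideal_pow_ideal:
  assumes "subring S" "ideal_in S A"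
  shows "ideal_in S (ideal_pow S A k)"
proof (induction k)
  case 0 then show ?case using assms by (simp add: ideal_self)
next
  case (Suc k)
  have "{a * b |a b. a \<in> ideal_pow S A k \<and> b \<in> A} \<subseteq> S"
    using Suc assms ideal_in_subset[of S A] ideal_in_subset[of S "ideal_pow S A k"]
    by (auto simp: subring_def)
  then show ?case using assms by (simp add: ideal_mult_def gen_ideal_ideal)
qed

lemma ideal_pow_subset: "subring S \<Longrightarrow> ideal_in S A \<Longrightarrow> ideal_pow S A k \<subseteq> S"
  using ideal_pow_ideal ideal_in_subset by blast

lemma ideal_pow_mult:
  "a \<in> ideal_pow S A k \<Longrightarrow> b \<in> A \<Longrightarrow> a * b \<in> ideal_pow S A (Suc k)"
proof -
  assume "a \<in> ideal_pow S A k" "b \<in> A"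
  then have "a * b \<in> {a * b |a b. a \<in> ideal_pow S A k \<and> b \<in> A}" by blast
  then show ?thesis unfolding ideal_pow.simps ideal_mult_def by (rule subsetD[OF gen_ideal_gens])
qed

lemma ideal_pow_Suc_least:
  "ideal_in S B \<Longrightarrow> (\<And>a b. a \<in> ideal_pow S A k \<Longrightarrow> b \<in> A \<Longrightarrow> a * b \<in> B)
    \<Longrightarrow> ideal_pow S A (Suc k) \<subseteq> B"
  unfolding ideal_pow.simps ideal_mult_def by (rule gen_ideal_least) blast+

lemma colon_ideal: "subring S \<Longrightarrow> ideal_in S A \<Longrightarrow> ideal_in S (colon S A g)"
  unfolding ideal_in_def colon_def subring_def
  by (auto simp: distrib_right mult.assoc)

lemma prime_one: "subring S \<Longrightarrow> prime_ideal_in S P \<Longrightarrow> 1 \<notin> P"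
proof
  assume S: "subring S" and P: "prime_ideal_in S P" and one: "1 \<in> P"
  have "S \<subseteq> P"
  proof
    fix r assume "r \<in> S"
    then have "r * 1 \<in> P" using P one unfolding prime_ideal_in_def ideal_in_def by blast
    then show "r \<in> P" by simp
  qed
  moreover have "P \<subseteq> S" using P unfolding prime_ideal_in_def ideal_in_def by blast
  ultimately show False using P unfolding prime_ideal_in_def by blast
qed

lemma prime_prod:
  assumes "subring S" "prime_ideal_in S P" "finite D" "\<And>d. d \<in> D \<Longrightarrow> a d \<in> S - P"
  shows "prod a D \<notin> P"
  using assms(3,4)
proof (induction D rule: finite_induct)
  case empty then show ?case using prime_one[OF assms(1,2)] by simp
next
  case (insert x F)
  have "prod a F \<in> S" using insert(4) by (intro subring_prod[OF assms(1)]) blast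
  then show ?case using insert assms(2) unfolding prime_ideal_in_def by auto
qed

lemma prime_inter:
  assumes "subring S" "prime_ideal_in S P" "finite D"
    and "\<And>d. d \<in> D \<Longrightarrow> ideal_in S (A d)"
    and "P = {r \<in> S. \<forall>d\<in>D. r \<in> A d}"
  shows "\<exists>d\<in>D. P = A d"
proof (rule ccontr)
  assume "\<not> ?thesis"
  then have ne: "\<And>d. d \<in> D \<Longrightarrow> P \<noteq> A d" by blast
  have sub: "P \<subseteq> A d" if "d \<in> D" for d using assms(5) that by blast
  have "\<forall>d\<in>D. \<exists>x. x \<in> A d - P"
  proof
    fix d assume d: "d \<in> D"
    show "\<exists>x. x \<in> A d - P"
    proof (rule ccontr)
      assume "\<not> (\<exists>x. x \<in> A d - P)"
      then have "A d \<subseteq> P" by blast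
      then show False using sub[OF d] ne[OF d] by blast
    qed
  qed
  from bchoice[OF this] obtain a where a0: "\<forall>d\<in>D. a d \<in> A d - P" by blast
  then have a: "\<And>d. d \<in> D \<Longrightarrow> a d \<in> A d - P" by blast
  have aS: "a d \<in> S - P" if "d \<in> D" for d
    using a[OF that] ideal_in_subset[OF assms(4)[OF that]] by blast
  have "prod a D \<notin> P" by (rule prime_prod[OF assms(1,2,3) aS])
  moreover have "prod a D \<in> S" using aS by (intro subring_prod[OF assms(1)]) blast
  moreover have "prod a D \<in> A d" if "d \<in> D" for d
  proof -
    have "prod a D = a d * prod a (D - {d})" using that assms(3) by (simp add: prod.remove)
    moreover have "prod a (D - {d}) \<in> S" using aS by (intro subring_prod[OF assms(1)]) blast
    ultimately show ?thesis using ideal_in_mult2[OF assms(4)[OF that]] a[OF that] by simp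
  qed
  ultimately have "prod a D \<in> {r \<in> S. \<forall>d\<in>D. r \<in> A d}" by blast
  then show False using \<open>prod a D \<notin> P\<close> assms(5) by simp
qed

definition lo :: "nat \<Rightarrow> (nat \<Rightarrow>\<^sub>0 nat) \<Rightarrow> (nat \<Rightarrow>\<^sub>0 nat)" where
  "lo s e = Abs_poly_mapping (\<lambda>i. if i < s then Poly_Mapping.lookup e i else 0)"

definition hi :: "nat \<Rightarrow> (nat \<Rightarrow>\<^sub>0 nat) \<Rightarrow> (nat \<Rightarrow>\<^sub>0 nat)" where
  "hi s e = Abs_poly_mapping (\<lambda>i. if i < s then 0 else Poly_Mapping.lookup e i)"

lemma lookup_lo: "Poly_Mapping.lookup (lo s e) i = (if i < s then Poly_Mapping.lookup e i else 0)"
proof -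
  have "finite {i. (if i < s then Poly_Mapping.lookup e i else 0) \<noteq> 0}"
    by (rule finite_subset[of _ "Poly_Mapping.keys e"]) (auto simp: in_keys_iff)
  then show ?thesis unfolding lo_def by simp
qed

lemma lookup_hi: "Poly_Mapping.lookup (hi s e) i = (if i < s then 0 else Poly_Mapping.lookup e i)"
proof -
  have "finite {i. (if i < s then 0 else Poly_Mapping.lookup e i) \<noteq> 0}"
    by (rule finite_subset[of _ "Poly_Mapping.keys e"]) (auto simp: in_keys_iff)
  then show ?thesis unfolding hi_def by simp
qed

lemma lo_add: "lo s (a + b) = lo s a + lo s b"
  by (rule poly_mapping_eqI) (simp add: lookup_lo lookup_add)

lemma hi_add: "hi s (a + b) = hi s a + hi s b"
  by (rule poly_mapping_eqI) (simp add: lookup_hi lookup_add)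

lemma lo_hi: "lo s e + hi s e = e"
  by (rule poly_mapping_eqI) (simp add: lookup_hi lookup_lo lookup_add)

lemma keys_lo: "Poly_Mapping.keys (lo s e) \<subseteq> {..<s}"
  by (auto simp: in_keys_iff lookup_lo split: if_splits)

lemma keys_hi: "Poly_Mapping.keys (hi s e) \<subseteq> Poly_Mapping.keys e"
  by (auto simp: in_keys_iff lookup_hi split: if_splits)

lemma hi_low: "Poly_Mapping.keys e \<subseteq> {..<s} \<Longrightarrow> hi s e = 0"
  by (rule poly_mapping_eqI) (auto simp: lookup_hi in_keys_iff)

lemma lo_low: "Poly_Mapping.keys e \<subseteq> {..<s} \<Longrightarrow> lo s e = e"
  by (rule poly_mapping_eqI) (auto simp: lookup_lo in_keys_iff)

lemma lo_high: "Poly_Mapping.keys e \<subseteq> {s..<n} \<Longrightarrow> lo s e = 0"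
  by (rule poly_mapping_eqI) (auto simp: lookup_lo in_keys_iff)

lemma hi_high: "Poly_Mapping.keys e \<subseteq> {s..<n} \<Longrightarrow> hi s e = e"
  by (rule poly_mapping_eqI) (auto simp: lookup_hi in_keys_iff)

lemma hi_hi: "hi s (hi s e) = hi s e"
  by (rule poly_mapping_eqI) (auto simp: lookup_hi)

lemma lo_hi0: "lo s (hi s e) = 0"
  by (rule poly_mapping_eqI) (auto simp: lookup_hi lookup_lo)

lemma hi_lo0: "hi s (lo s e) = 0"
  by (rule poly_mapping_eqI) (auto simp: lookup_hi lookup_lo)

lemma lo_lo: "lo s (lo s e) = lo s e"
  by (rule poly_mapping_eqI) (auto simp: lookup_lo)

lemma poly_expand: "(p::'a::comm_ring_1 mpoly) = (\<Sum>e\<in>Poly_Mapping.keys p. Poly_Mapping.single e (Poly_Mapping.lookup p e))"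
proof (rule poly_mapping_eqI)
  fix x
  have "Poly_Mapping.lookup (\<Sum>e\<in>Poly_Mapping.keys p. Poly_Mapping.single e (Poly_Mapping.lookup p e)) x
     = (\<Sum>e\<in>Poly_Mapping.keys p. (if e = x then Poly_Mapping.lookup p e else 0))"
    by (simp add: lookup_sum lookup_single when_def)
  also have "\<dots> = Poly_Mapping.lookup p x"
    by (simp add: in_keys_iff)
  finally show "Poly_Mapping.lookup p x = Poly_Mapping.lookup (\<Sum>e\<in>Poly_Mapping.keys p. Poly_Mapping.single e (Poly_Mapping.lookup p e)) x"
    by simp
qed

definition pmap :: "((nat \<Rightarrow>\<^sub>0 nat) \<Rightarrow> (nat \<Rightarrow>\<^sub>0 nat)) \<Rightarrow> 'a::comm_ring_1 mpoly \<Rightarrow> 'a mpoly" where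
  "pmap h p = (\<Sum>e\<in>Poly_Mapping.keys p. Poly_Mapping.single (h e) (Poly_Mapping.lookup p e))"

lemma pmap_add: "pmap h (p + q) = pmap h p + pmap h q"
  unfolding pmap_def by (rule setsum_keys_plus_distrib) (simp_all add: single_add)

lemma pmap_zero[simp]: "pmap h 0 = 0"
  by (simp add: pmap_def)

lemma pmap_single: "pmap h (Poly_Mapping.single e c) = Poly_Mapping.single (h e) c"
  by (simp add: pmap_def)

lemma pmap_sum: "pmap h (sum f A) = (\<Sum>x\<in>A. pmap h (f x))"
  by (induction A rule: infinite_finite_induct) (simp_all add: pmap_add)

lemma pmap_sum_single: "pmap h (\<Sum>x\<in>A. Poly_Mapping.single (g x) (c x)) = (\<Sum>x\<in>A. Poly_Mapping.single (h (g x)) (c x))"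
  by (simp add: pmap_sum pmap_single)

lemma mult_expand:
  "(p::'a::comm_ring_1 mpoly) * q = (\<Sum>a\<in>Poly_Mapping.keys p. \<Sum>b\<in>Poly_Mapping.keys q.
      Poly_Mapping.single (a + b) (Poly_Mapping.lookup p a * Poly_Mapping.lookup q b))"
proof -
  have "p * q = (\<Sum>a\<in>Poly_Mapping.keys p. Poly_Mapping.single a (Poly_Mapping.lookup p a)) *
                (\<Sum>b\<in>Poly_Mapping.keys q. Poly_Mapping.single b (Poly_Mapping.lookup q b))"
    using poly_expand[of p] poly_expand[of q] by simp
  also have "\<dots> = (\<Sum>a\<in>Poly_Mapping.keys p. \<Sum>b\<in>Poly_Mapping.keys q.
      Poly_Mapping.single a (Poly_Mapping.lookup p a) * Poly_Mapping.single b (Poly_Mapping.lookup q b))"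
    by (simp add: sum_product)
  finally show ?thesis by (simp add: mult_single)
qed

lemma pmap_mult:
  assumes hadd: "\<And>a b. h (a + b) = h a + h b"
  shows "pmap h ((p::'a::comm_ring_1 mpoly) * q) = pmap h p * pmap h q"
proof -
  have "pmap h (p * q) = (\<Sum>a\<in>Poly_Mapping.keys p. \<Sum>b\<in>Poly_Mapping.keys q.
      Poly_Mapping.single (h a + h b) (Poly_Mapping.lookup p a * Poly_Mapping.lookup q b))"
    by (simp add: mult_expand[of p q] pmap_sum pmap_single hadd)
  also have "\<dots> = (\<Sum>a\<in>Poly_Mapping.keys p. \<Sum>b\<in>Poly_Mapping.keys q.
      Poly_Mapping.single (h a) (Poly_Mapping.lookup p a) * Poly_Mapping.single (h b) (Poly_Mapping.lookup q b))"
    by (simp add: mult_single)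
  also have "\<dots> = pmap h p * pmap h q"
    by (simp add: pmap_def sum_product)
  finally show ?thesis .
qed

lemma keys_pmap: "Poly_Mapping.keys (pmap h p) \<subseteq> h ` Poly_Mapping.keys p"
proof -
  have "Poly_Mapping.keys (pmap h p) \<subseteq> (\<Union>e\<in>Poly_Mapping.keys p. Poly_Mapping.keys (Poly_Mapping.single (h e) (Poly_Mapping.lookup p e)))"
    unfolding pmap_def by (rule keys_sum)
  also have "\<dots> \<subseteq> h ` Poly_Mapping.keys p" by auto
  finally show ?thesis .
qed

lemma pmap_id_on: "(\<And>e. e \<in> Poly_Mapping.keys p \<Longrightarrow> h e = e) \<Longrightarrow> pmap h p = p"
  unfolding pmap_def by (subst (2) poly_expand[of p]) (rule sum.cong, auto)

definition phi :: "nat \<Rightarrow> 'a::comm_ring_1 mpoly \<Rightarrow> 'a mpoly" where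
  "phi s p = pmap (lo s) p"

definition proj :: "nat \<Rightarrow> (nat \<Rightarrow>\<^sub>0 nat) \<Rightarrow> 'a::comm_ring_1 mpoly \<Rightarrow> 'a mpoly" where
  "proj s d p = Abs_poly_mapping (\<lambda>e. if hi s e = d then Poly_Mapping.lookup p e else 0)"

definition degs :: "nat \<Rightarrow> 'a::comm_ring_1 mpoly \<Rightarrow> (nat \<Rightarrow>\<^sub>0 nat) set" where
  "degs s p = hi s ` Poly_Mapping.keys p"

lemma finite_degs[simp]: "finite (degs s p)"
  by (simp add: degs_def)

lemma lookup_proj: "Poly_Mapping.lookup (proj s d p) e = (if hi s e = d then Poly_Mapping.lookup p e else 0)"
proof -
  have "finite {e. (if hi s e = d then Poly_Mapping.lookup p e else 0) \<noteq> 0}"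
    by (rule finite_subset[of _ "Poly_Mapping.keys p"]) (auto simp: in_keys_iff)
  then show ?thesis unfolding proj_def by simp
qed

lemma proj_add: "proj s d (p + q) = proj s d p + proj s d q"
  by (rule poly_mapping_eqI) (simp add: lookup_proj lookup_add)

lemma proj_zero[simp]: "proj s d 0 = 0"
  by (rule poly_mapping_eqI) (simp add: lookup_proj)

lemma proj_sum: "proj s d (sum f A) = (\<Sum>x\<in>A. proj s d (f x))"
  by (induction A rule: infinite_finite_induct) (simp_all add: proj_add)

lemma keys_proj: "Poly_Mapping.keys (proj s d p) = {e \<in> Poly_Mapping.keys p. hi s e = d}"
  by (auto simp: in_keys_iff lookup_proj split: if_splits)

lemma proj_homog1: "(\<And>e. e \<in> Poly_Mapping.keys p \<Longrightarrow> hi s e = d) \<Longrightarrow> proj s d p = p"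
  by (rule poly_mapping_eqI) (auto simp: lookup_proj in_keys_iff)

lemma proj_homog0: "(\<And>e. e \<in> Poly_Mapping.keys p \<Longrightarrow> hi s e \<noteq> d) \<Longrightarrow> proj s d p = 0"
  by (rule poly_mapping_eqI) (auto simp: lookup_proj in_keys_iff)

lemma proj_notin: "d \<notin> degs s p \<Longrightarrow> proj s d p = 0"
  by (rule proj_homog0) (auto simp: degs_def)

lemma decomp: "p = (\<Sum>d\<in>degs s p. proj s d p)"
proof (rule poly_mapping_eqI)
  fix e
  have "Poly_Mapping.lookup (\<Sum>d\<in>degs s p. proj s d p) e
       = (\<Sum>d\<in>degs s p. if hi s e = d then Poly_Mapping.lookup p e else 0)"
    by (simp add: lookup_sum lookup_proj)
  also have "\<dots> = (if hi s e \<in> degs s p then Poly_Mapping.lookup p e else 0)"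
    by (simp add: sum.delta)
  also have "\<dots> = Poly_Mapping.lookup p e"
    by (auto simp: degs_def in_keys_iff)
  finally show "Poly_Mapping.lookup p e = Poly_Mapping.lookup (\<Sum>d\<in>degs s p. proj s d p) e" by simp
qed

lemma keys_mult_hom:
  assumes "\<And>e. e \<in> Poly_Mapping.keys p \<Longrightarrow> hi s e = d1"
    and "\<And>e. e \<in> Poly_Mapping.keys q \<Longrightarrow> hi s e = d2"
    and "e \<in> Poly_Mapping.keys ((p::'a::comm_ring_1 mpoly) * q)"
  shows "hi s e = d1 + d2"
proof -
  obtain a b where "e = a + b" "a \<in> Poly_Mapping.keys p" "b \<in> Poly_Mapping.keys q"
    using keys_mult[of p q] assms(3) by blast
  then show ?thesis using assms(1,2) by (simp add: hi_add)
qed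

lemma keys_proj_hi: "e \<in> Poly_Mapping.keys (proj s d p) \<Longrightarrow> hi s e = d"
  by (simp add: keys_proj)

lemma proj_mult:
  "proj s d ((p::'a::comm_ring_1 mpoly) * q) = (\<Sum>d1\<in>degs s p. \<Sum>d2\<in>degs s q.
      (if d1 + d2 = d then proj s d1 p * proj s d2 q else 0))"
proof -
  have "p * q = (\<Sum>d1\<in>degs s p. proj s d1 p) * (\<Sum>d2\<in>degs s q. proj s d2 q)"
    using decomp[of p s] decomp[of q s] by (rule arg_cong2[where f="(*)"])
  also have "\<dots> = (\<Sum>d1\<in>degs s p. \<Sum>d2\<in>degs s q. proj s d1 p * proj s d2 q)"
    by (rule sum_product)
  finally have eq: "p * q = (\<Sum>d1\<in>degs s p. \<Sum>d2\<in>degs s q. proj s d1 p * proj s d2 q)" .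
  have "proj s d (p * q) = (\<Sum>d1\<in>degs s p. \<Sum>d2\<in>degs s q. proj s d (proj s d1 p * proj s d2 q))"
    by (simp only: eq proj_sum)
  also have "\<dots> = (\<Sum>d1\<in>degs s p. \<Sum>d2\<in>degs s q.
      (if d1 + d2 = d then proj s d1 p * proj s d2 q else 0))"
  proof (intro sum.cong refl)
    fix d1 d2
    have h: "\<And>e. e \<in> Poly_Mapping.keys (proj s d1 p * proj s d2 q) \<Longrightarrow> hi s e = d1 + d2"
      by (rule keys_mult_hom[of "proj s d1 p" s d1 "proj s d2 q" d2]) (simp_all add: keys_proj)
    show "proj s d (proj s d1 p * proj s d2 q) = (if d1 + d2 = d then proj s d1 p * proj s d2 q else 0)"
    proof (cases "d1 + d2 = d")
      case True
      have "proj s d (proj s d1 p * proj s d2 q) = proj s d1 p * proj s d2 q"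
      proof (rule proj_homog1)
        fix e assume "e \<in> Poly_Mapping.keys (proj s d1 p * proj s d2 q)"
        from h[OF this] True show "hi s e = d" by simp
      qed
      then show ?thesis using True by simp
    next
      case False
      have "proj s d (proj s d1 p * proj s d2 q) = 0"
      proof (rule proj_homog0)
        fix e assume "e \<in> Poly_Mapping.keys (proj s d1 p * proj s d2 q)"
        from h[OF this] False show "hi s e \<noteq> d" by simp
      qed
      then show ?thesis using False by simp
    qed
  qed
  finally show ?thesis .
qed

lemma phi_add: "phi s (p + q) = phi s p + phi s q"
  by (simp add: phi_def pmap_add)

lemma phi_zero[simp]: "phi s 0 = 0"
  by (simp add: phi_def)

lemma phi_mult: "phi s ((p::'a::comm_ring_1 mpoly) * q) = phi s p * phi s q"
  unfolding phi_def by (rule pmap_mult) (rule lo_add)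

lemma phi_sum: "phi s (sum f A) = (\<Sum>x\<in>A. phi s (f x))"
  by (simp add: phi_def pmap_sum)

lemma phi_single: "phi s (Poly_Mapping.single e c) = Poly_Mapping.single (lo s e) c"
  by (simp add: phi_def pmap_single)

lemma phi_single_high: "Poly_Mapping.keys c \<subseteq> {s..<n} \<Longrightarrow> phi s (Poly_Mapping.single c 1) = 1"
  by (simp add: phi_single lo_high)

lemma phi_in: "phi s p \<in> polyring {..<s}"
  unfolding polyring_def phi_def using keys_pmap[of "lo s" p] keys_lo by blast

lemma phi_low: "p \<in> polyring {..<s} \<Longrightarrow> phi s p = p"
  unfolding phi_def polyring_def by (rule pmap_id_on) (simp add: lo_low)

lemma homog_recon:
  assumes "\<And>e. e \<in> Poly_Mapping.keys p \<Longrightarrow> hi s e = d"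
  shows "p = phi s p * Poly_Mapping.single d 1"
proof -
  have "phi s p * Poly_Mapping.single d 1 = (\<Sum>e\<in>Poly_Mapping.keys p.
      Poly_Mapping.single (lo s e) (Poly_Mapping.lookup p e) * Poly_Mapping.single d 1)"
    by (simp add: phi_def pmap_def sum_distrib_right)
  also have "\<dots> = (\<Sum>e\<in>Poly_Mapping.keys p. Poly_Mapping.single e (Poly_Mapping.lookup p e))"
  proof (rule sum.cong[OF refl])
    fix e assume "e \<in> Poly_Mapping.keys p"
    then have "lo s e + d = e" using assms lo_hi[of s e] by simp
    then show "Poly_Mapping.single (lo s e) (Poly_Mapping.lookup p e) * Poly_Mapping.single d 1 =
        Poly_Mapping.single e (Poly_Mapping.lookup p e)" by (simp add: mult_single)
  qed
  also have "\<dots> = p" by (rule poly_expand[symmetric])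
  finally show ?thesis by simp
qed

lemma proj_shift:
  assumes "\<And>e. e \<in> Poly_Mapping.keys f \<Longrightarrow> hi s e = c"
  shows "proj s (d + c) ((p::'a::comm_ring_1 mpoly) * f) = proj s d p * f"
proof (cases "f = 0")
  case True then show ?thesis by simp
next
  case False
  then have "Poly_Mapping.keys f \<noteq> {}" by simp
  then have D: "degs s f = {c}" using assms unfolding degs_def by blast
  have pf: "proj s c f = f" using assms by (rule proj_homog1)
  have "proj s (d + c) (p * f) = (\<Sum>d1\<in>degs s p. \<Sum>d2\<in>{c}.
      (if d1 + d2 = d + c then proj s d1 p * proj s d2 f else 0))"
    by (simp only: proj_mult D)
  also have "\<dots> = (\<Sum>d1\<in>degs s p. (if d1 = d then proj s d1 p * f else 0))"
    by (rule sum.cong[OF refl]) (simp add: pf)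
  also have "\<dots> = (if d \<in> degs s p then proj s d p * f else 0)"
    by (simp add: sum.delta)
  also have "\<dots> = proj s d p * f" by (simp add: proj_notin)
  finally show ?thesis .
qed

lemma proj_low: "r \<in> polyring {..<s} \<Longrightarrow> proj s d r = (if d = 0 then r else 0)"
  by (auto simp: polyring_def hi_low intro!: proj_homog1 proj_homog0)

lemma proj_in: "p \<in> polyring V \<Longrightarrow> proj s d p \<in> polyring V"
  by (auto simp: polyring_def keys_proj)

lemma single_in: "Poly_Mapping.keys c \<subseteq> V \<Longrightarrow> (Poly_Mapping.single c 1 :: 'a::comm_ring_1 mpoly) \<in> polyring V"
  by (simp add: polyring_def)

lemma degs_in: "p \<in> polyring V \<Longrightarrow> d \<in> degs s p \<Longrightarrow> Poly_Mapping.keys d \<subseteq> V"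
  unfolding polyring_def degs_def using keys_hi by blast

lemma low_hi0: "p \<in> polyring {..<s} \<Longrightarrow> e \<in> Poly_Mapping.keys p \<Longrightarrow> hi s e = 0"
  by (auto simp: polyring_def hi_low)

lemma phi_proj_low: "r \<in> polyring {..<s} \<Longrightarrow> phi s (proj s d r) = (if d = 0 then r else 0)"
  by (simp add: proj_low phi_low)

lemma phi_if: "phi s (if b then x else 0) = (if b then phi s x else 0)"
  by simp

lemma phi_proj_mult:
  "phi s (proj s d ((p::'a::comm_ring_1 mpoly) * q)) = (\<Sum>d1\<in>degs s p. \<Sum>d2\<in>degs s q.
      (if d1 + d2 = d then phi s (proj s d1 p) * phi s (proj s d2 q) else 0))"
  by (simp only: proj_mult phi_sum phi_if phi_mult)

lemma ideal_preimage_mult: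
  assumes "subring S1" "S1 \<subseteq> S" "ideal_in S L" "w \<in> S"
  shows "ideal_in S1 {b \<in> S1. b * w \<in> L}"
  unfolding ideal_in_def
proof (intro conjI ballI)
  show "{b \<in> S1. b * w \<in> L} \<subseteq> S1" by blast
  show "0 \<in> {b \<in> S1. b * w \<in> L}" using assms(1,3) by (simp add: subring_def ideal_in_zero)
  fix a b assume a: "a \<in> {b \<in> S1. b * w \<in> L}" and b: "b \<in> {b \<in> S1. b * w \<in> L}"
  then show "a + b \<in> {b \<in> S1. b * w \<in> L}"
    using assms(1) ideal_in_add[OF assms(3), of "a * w" "b * w"] by (simp add: subring_def distrib_right)
next
  fix r a assume r: "r \<in> S1" and a: "a \<in> {b \<in> S1. b * w \<in> L}"
  then have "r * (a * w) \<in> L" using ideal_in_mult[OF assms(3)] assms(2) by blast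
  then show "r * a \<in> {b \<in> S1. b * w \<in> L}" using r a assms(1) by (simp add: subring_def mult.assoc)
qed

lemma single_power: "\<exists>c. (Poly_Mapping.single W 1 :: 'a::comm_ring_1 mpoly) ^ j = Poly_Mapping.single c 1
   \<and> Poly_Mapping.keys c \<subseteq> Poly_Mapping.keys W"
proof (induction j)
  case 0 then show ?case by (intro exI[of _ 0]) simp
next
  case (Suc j)
  then obtain c where c: "(Poly_Mapping.single W 1 :: 'a mpoly) ^ j = Poly_Mapping.single c 1"
    "Poly_Mapping.keys c \<subseteq> Poly_Mapping.keys W" by blast
  have "(Poly_Mapping.single W 1 :: 'a mpoly) ^ Suc j = Poly_Mapping.single (W + c) 1"
    by (simp add: c mult_single)
  moreover have "Poly_Mapping.keys (W + c) \<subseteq> Poly_Mapping.keys W"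
    using keys_add[of W c] c(2) by blast
  ultimately show ?case by blast
qed

locale cp =
  fixes s n m :: nat and u :: "nat \<Rightarrow> (nat \<Rightarrow>\<^sub>0 nat)"
    and J :: "nat \<Rightarrow> 'a::comm_ring_1 mpoly set" and ee :: "nat \<Rightarrow> (nat \<Rightarrow>\<^sub>0 nat)"
  assumes sn: "s \<le> n"
    and u_keys: "\<And>i. i < m \<Longrightarrow> Poly_Mapping.keys (u i) \<subseteq> {..<s}"
    and J_sub: "\<And>i. i < m \<Longrightarrow> J i \<subseteq> polyring {s..<n}"
    and ee_keys: "\<And>i. i < m \<Longrightarrow> Poly_Mapping.keys (ee i) \<subseteq> {s..<n}"
    and ee_J: "\<And>i. i < m \<Longrightarrow> mmonom (ee i) \<in> J i"
begin

abbreviation "S1 \<equiv> (polyring {..<s} :: 'a mpoly set)"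
abbreviation "S \<equiv> (polyring {..<n} :: 'a mpoly set)"

definition "I = gen_ideal S1 (mmonom ` u ` {..<m})"
definition "Gen = (\<Union>i<m. {mmonom (u i) * g | g. g \<in> J i})"
definition "L = gen_ideal S Gen"
definition "W = (\<Sum>i<m. ee i)"
definition "w = (Poly_Mapping.single W 1 :: 'a mpoly)"

lemma S1_sub: "S1 \<subseteq> S"
proof -
  show ?thesis unfolding polyring_def using sn by (force simp: subset_iff)
qed

lemma S2_sub: "polyring {s..<n} \<subseteq> S"
proof -
  show ?thesis unfolding polyring_def by (force simp: subset_iff)
qed

lemma subS1: "subring S1" by (rule subring_polyring)
lemma subS: "subring S" by (rule subring_polyring)

lemma u_in: "i < m \<Longrightarrow> mmonom (u i) \<in> S1"
  unfolding mmonom_def using u_keys by (rule single_in)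

lemma I_ideal: "ideal_in S1 I"
  unfolding I_def using u_in by (intro gen_ideal_ideal[OF subS1]) blast

lemma Gen_sub: "Gen \<subseteq> S"
proof
  fix x assume "x \<in> Gen"
  then obtain i g where i: "i < m" "g \<in> J i" "x = mmonom (u i) * g" unfolding Gen_def by blast
  have "mmonom (u i) \<in> S" using u_in[OF i(1)] S1_sub by blast
  moreover have "g \<in> S" using J_sub[OF i(1)] i(2) S2_sub by blast
  ultimately show "x \<in> S" using i(3) subS by (simp add: subring_def)
qed

lemma L_ideal: "ideal_in S L"
  unfolding L_def using Gen_sub by (rule gen_ideal_ideal[OF subS])

lemma W_keys: "Poly_Mapping.keys W \<subseteq> {s..<n}"
proof -
  have "Poly_Mapping.keys W \<subseteq> (\<Union>i<m. Poly_Mapping.keys (ee i))"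
    unfolding W_def by (rule keys_sum)
  also have "\<dots> \<subseteq> {s..<n}" using ee_keys by blast
  finally show ?thesis .
qed

lemma wpow: "\<exists>c. w ^ j = Poly_Mapping.single c 1 \<and> Poly_Mapping.keys c \<subseteq> {s..<n}"
proof -
  obtain c where c: "(Poly_Mapping.single W 1 :: 'a mpoly) ^ j = Poly_Mapping.single c 1"
    "Poly_Mapping.keys c \<subseteq> Poly_Mapping.keys W" using single_power[of W j] by blast
  have "Poly_Mapping.keys c \<subseteq> {s..<n}" using c(2) W_keys by (rule subset_trans)
  then show ?thesis using c(1) unfolding w_def by blast
qed

lemma wpow_in: "w ^ j \<in> S"
proof -
  obtain c where c: "w ^ j = Poly_Mapping.single c 1" "Poly_Mapping.keys c \<subseteq> {s..<n}"
    using wpow[of j] by blast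
  have "(Poly_Mapping.single c 1 :: 'a mpoly) \<in> polyring {s..<n}" using c(2) by (rule single_in)
  then show ?thesis using c(1) S2_sub by auto
qed

lemma uw_L: "i < m \<Longrightarrow> mmonom (u i) * w \<in> L"
proof -
  assume i: "i < m"
  have W: "W = ee i + (\<Sum>j\<in>{..<m} - {i}. ee j)"
    unfolding W_def using i by (simp add: sum.remove)
  have rk: "Poly_Mapping.keys (\<Sum>j\<in>{..<m} - {i}. ee j) \<subseteq> {..<n}"
  proof -
    have "Poly_Mapping.keys (\<Sum>j\<in>{..<m} - {i}. ee j) \<subseteq> (\<Union>j\<in>{..<m} - {i}. Poly_Mapping.keys (ee j))"
      by (rule keys_sum)
    also have "\<dots> \<subseteq> {..<n}" using ee_keys by fastforce
    finally show ?thesis .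
  qed
  have w: "w = mmonom (ee i) * Poly_Mapping.single (\<Sum>j\<in>{..<m} - {i}. ee j) 1"
    unfolding w_def mmonom_def by (subst W) (simp add: mult_single)
  have "mmonom (u i) * mmonom (ee i) \<in> Gen" unfolding Gen_def using i ee_J[OF i] by blast
  then have "mmonom (u i) * mmonom (ee i) \<in> L" unfolding L_def by (rule subsetD[OF gen_ideal_gens])
  moreover have "(Poly_Mapping.single (\<Sum>j\<in>{..<m} - {i}. ee j) 1 :: 'a mpoly) \<in> S"
    using rk by (rule single_in)
  ultimately have "mmonom (u i) * mmonom (ee i) * Poly_Mapping.single (\<Sum>j\<in>{..<m} - {i}. ee j) 1 \<in> L"
    using ideal_in_mult2[OF L_ideal] by blast
  then show ?thesis using w by (simp add: mult.assoc)
qed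

lemma Iw_L: "b \<in> I \<Longrightarrow> b * w \<in> L"
proof -
  have w: "w \<in> S" using wpow_in[of 1] by simp
  have id: "ideal_in S1 {b \<in> S1. b * w \<in> L}"
    by (rule ideal_preimage_mult[OF subS1 S1_sub L_ideal w])
  have "I \<subseteq> {b \<in> S1. b * w \<in> L}"
    unfolding I_def using u_in uw_L by (intro gen_ideal_least[OF id]) blast
  then show "b \<in> I \<Longrightarrow> b * w \<in> L" by blast
qed

lemma F1: "g \<in> ideal_pow S1 I j \<Longrightarrow> g * w ^ j \<in> ideal_pow S L j"
proof (induction j arbitrary: g)
  case 0 then show ?case using S1_sub by auto
next
  case (Suc j)
  have id: "ideal_in S1 {b \<in> S1. b * w ^ Suc j \<in> ideal_pow S L (Suc j)}"
    by (rule ideal_preimage_mult[OF subS1 S1_sub ideal_pow_ideal[OF subS L_ideal] wpow_in])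
  have "ideal_pow S1 I (Suc j) \<subseteq> {b \<in> S1. b * w ^ Suc j \<in> ideal_pow S L (Suc j)}"
  proof (rule ideal_pow_Suc_least[OF id])
    fix a b assume a: "a \<in> ideal_pow S1 I j" and b: "b \<in> I"
    have "a \<in> S1" using a ideal_pow_subset[OF subS1 I_ideal] by blast
    moreover have "b \<in> S1" using b ideal_in_subset[OF I_ideal] by blast
    ultimately have ab: "a * b \<in> S1" using subS1 by (simp add: subring_def)
    have "(a * w ^ j) * (b * w) \<in> ideal_pow S L (Suc j)"
      by (rule ideal_pow_mult[OF Suc.IH[OF a] Iw_L[OF b]])
    then have "a * b * w ^ Suc j \<in> ideal_pow S L (Suc j)" by (simp add: algebra_simps)
    then show "a * b \<in> {b \<in> S1. b * w ^ Suc j \<in> ideal_pow S L (Suc j)}" using ab by blast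
  qed
  then show ?case using Suc.prems by blast
qed

definition "Gr M = {p \<in> S. \<forall>d. phi s (proj s d p) \<in> M}"

lemma Gr_ideal: "ideal_in S1 M \<Longrightarrow> ideal_in S (Gr M)"
  unfolding ideal_in_def[of S "Gr M"]
proof (intro conjI ballI)
  assume M: "ideal_in S1 M"
  show "Gr M \<subseteq> S" by (auto simp: Gr_def)
  show "0 \<in> Gr M" using M subS by (simp add: Gr_def ideal_in_zero subring_def)
  fix a b assume a: "a \<in> Gr M" and b: "b \<in> Gr M"
  then show "a + b \<in> Gr M"
    using subS ideal_in_add[OF M] by (simp add: Gr_def subring_def proj_add phi_add)
next
  fix r a assume M: "ideal_in S1 M" and r: "r \<in> S" and a: "a \<in> Gr M"
  have "r * a \<in> S" using r a subS by (simp add: Gr_def subring_def)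
  moreover have "phi s (proj s d (r * a)) \<in> M" for d
    unfolding phi_proj_mult
  proof (intro ideal_in_sum[OF M])
    fix d1 d2
    have "phi s (proj s d1 r) * phi s (proj s d2 a) \<in> M"
      using ideal_in_mult[OF M phi_in] a by (simp add: Gr_def)
    then show "(if d1 + d2 = d then phi s (proj s d1 r) * phi s (proj s d2 a) else 0) \<in> M"
      using ideal_in_zero[OF M] by simp
  qed
  ultimately show "r * a \<in> Gr M" by (simp add: Gr_def)
qed

lemma L_Gr: "L \<subseteq> Gr I"
  unfolding L_def
proof (rule gen_ideal_least[OF Gr_ideal[OF I_ideal]])
  show "Gen \<subseteq> Gr I"
  proof
    fix x assume "x \<in> Gen"
    then obtain i g where i: "i < m" "g \<in> J i" "x = mmonom (u i) * g" unfolding Gen_def by blast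
    have x: "x \<in> S" using \<open>x \<in> Gen\<close> Gen_sub by blast
    have U: "mmonom (u i) \<in> S1" by (rule u_in[OF i(1)])
    have "mmonom (u i) \<in> mmonom ` u ` {..<m}" using i(1) by blast
    then have UI: "mmonom (u i) \<in> I" unfolding I_def by (rule subsetD[OF gen_ideal_gens])
    have "phi s (proj s d x) \<in> I" for d
    proof -
      have "proj s (d + 0) (g * mmonom (u i)) = proj s d g * mmonom (u i)"
        by (rule proj_shift) (rule low_hi0[OF U])
      then have "phi s (proj s d x) = phi s (proj s d g) * mmonom (u i)"
        using i(3) by (simp add: mult.commute phi_mult phi_low[OF U])
      then show ?thesis using ideal_in_mult[OF I_ideal phi_in UI] by simp
    qed
    then show "x \<in> Gr I" using x by (simp add: Gr_def)
  qed
qed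

lemma F2: "p \<in> ideal_pow S L j \<Longrightarrow> phi s (proj s d p) \<in> ideal_pow S1 I j"
proof (induction j arbitrary: p d)
  case 0 then show ?case by (simp add: phi_in)
next
  case (Suc j)
  have "ideal_pow S L (Suc j) \<subseteq> Gr (ideal_pow S1 I (Suc j))"
  proof (rule ideal_pow_Suc_least[OF Gr_ideal[OF ideal_pow_ideal[OF subS1 I_ideal]]])
    fix a b assume a: "a \<in> ideal_pow S L j" and b: "b \<in> L"
    have "a \<in> S" using a ideal_pow_subset[OF subS L_ideal] by blast
    moreover have "b \<in> S" using b ideal_in_subset[OF L_ideal] by blast
    ultimately have ab: "a * b \<in> S" using subS by (simp add: subring_def)
    have "phi s (proj s d (a * b)) \<in> ideal_pow S1 I (Suc j)" for d
      unfolding phi_proj_mult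
    proof (intro ideal_in_sum[OF ideal_pow_ideal[OF subS1 I_ideal]])
      fix d1 d2
      have "phi s (proj s d2 b) \<in> I" using b L_Gr by (auto simp: Gr_def)
      then have "phi s (proj s d1 a) * phi s (proj s d2 b) \<in> ideal_pow S1 I (Suc j)"
        using ideal_pow_mult Suc.IH[OF a] by blast
      then show "(if d1 + d2 = d then phi s (proj s d1 a) * phi s (proj s d2 b) else 0) \<in> ideal_pow S1 I (Suc j)"
        using ideal_in_zero[OF ideal_pow_ideal[OF subS1 I_ideal]] by (simp del: ideal_pow.simps)
    qed
    then show "a * b \<in> Gr (ideal_pow S1 I (Suc j))" using ab by (simp add: Gr_def)
  qed
  then show ?case using Suc.prems by (auto simp: Gr_def)
qed

lemma K:
  assumes p: "p \<in> S"
  shows "p * w ^ j \<in> ideal_pow S L j \<longleftrightarrow> (\<forall>d. phi s (proj s d p) \<in> ideal_pow S1 I j)"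
proof -
  obtain c where c: "w ^ j = Poly_Mapping.single c 1" "Poly_Mapping.keys c \<subseteq> {s..<n}"
    using wpow by blast
  have hc: "hi s c = c" using c(2) by (rule hi_high)
  have kc: "\<And>e. e \<in> Poly_Mapping.keys (Poly_Mapping.single c (1::'a)) \<Longrightarrow> hi s e = c"
    using hc by simp
  show ?thesis
  proof
    assume h: "p * w ^ j \<in> ideal_pow S L j"
    show "\<forall>d. phi s (proj s d p) \<in> ideal_pow S1 I j"
    proof
      fix d
      have "phi s (proj s (d + c) (p * w ^ j)) \<in> ideal_pow S1 I j" by (rule F2[OF h])
      moreover have "proj s (d + c) (p * w ^ j) = proj s d p * w ^ j"
        unfolding c(1) by (rule proj_shift[OF kc])
      moreover have "phi s (w ^ j) = 1" unfolding c(1) using c(2) by (rule phi_single_high)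
      ultimately show "phi s (proj s d p) \<in> ideal_pow S1 I j" by (simp add: phi_mult)
    qed
  next
    assume h: "\<forall>d. phi s (proj s d p) \<in> ideal_pow S1 I j"
    have "p * w ^ j = (\<Sum>d\<in>degs s p. proj s d p) * w ^ j"
      using decomp[of p s] by (rule arg_cong)
    also have "\<dots> = (\<Sum>d\<in>degs s p. (phi s (proj s d p) * w ^ j) * Poly_Mapping.single d 1)"
      unfolding sum_distrib_right
    proof (rule sum.cong[OF refl])
      fix d
      have "proj s d p = phi s (proj s d p) * Poly_Mapping.single d 1"
        by (rule homog_recon) (rule keys_proj_hi)
      then show "proj s d p * w ^ j = phi s (proj s d p) * w ^ j * Poly_Mapping.single d 1"
        by (metis mult.assoc mult.commute)
    qed
    also have "\<dots> \<in> ideal_pow S L j"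
    proof (rule ideal_in_sum[OF ideal_pow_ideal[OF subS L_ideal]])
      fix d assume d: "d \<in> degs s p"
      have "Poly_Mapping.keys d \<subseteq> {..<n}" by (rule degs_in[OF p d])
      then have "(Poly_Mapping.single d 1 :: 'a mpoly) \<in> S" by (rule single_in)
      then show "phi s (proj s d p) * w ^ j * Poly_Mapping.single d 1 \<in> ideal_pow S L j"
        using ideal_in_mult2[OF ideal_pow_ideal[OF subS L_ideal] _ F1[OF h[rule_format]]] by blast
    qed
    finally show "p * w ^ j \<in> ideal_pow S L j" .
  qed
qed

lemma Gr_prime:
  assumes P: "prime_ideal_in S1 P"
  shows "prime_ideal_in S (Gr P)"
proof -
  have Pid: "ideal_in S1 P" using P by (simp add: prime_ideal_in_def)
  have P1: "1 \<notin> P" by (rule prime_one[OF subS1 P])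
  have one1: "(1::'a mpoly) \<in> S1" using subS1 by (simp add: subring_def)
  have one: "(1::'a mpoly) \<in> S" using subS by (simp add: subring_def)
  have "phi s (proj s 0 (1::'a mpoly)) = 1" using phi_proj_low[OF one1, of 0] by simp
  then have "phi s (proj s 0 (1::'a mpoly)) \<notin> P" using P1 by simp
  then have "1 \<notin> Gr P" unfolding Gr_def by blast
  then have ne: "Gr P \<noteq> S" using one by blast
  have pr: "p \<in> Gr P \<or> q \<in> Gr P" if p: "p \<in> S" and q: "q \<in> S" and pq: "p * q \<in> Gr P" for p q
  proof (rule ccontr)
    assume "\<not> (p \<in> Gr P \<or> q \<in> Gr P)"
    then have np: "p \<notin> Gr P" and nq: "q \<notin> Gr P" by auto
    define B1 where "B1 = {d \<in> degs s p. phi s (proj s d p) \<notin> P}"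
    define B2 where "B2 = {d \<in> degs s q. phi s (proj s d q) \<notin> P}"
    have B1ne: "B1 \<noteq> {}"
    proof -
      obtain d where d: "phi s (proj s d p) \<notin> P" using np p by (auto simp: Gr_def)
      have "d \<in> degs s p"
      proof (rule ccontr)
        assume "d \<notin> degs s p"
        then have "proj s d p = 0" by (rule proj_notin)
        then show False using d ideal_in_zero[OF Pid] by simp
      qed
      then show ?thesis using d B1_def by blast
    qed
    have B2ne: "B2 \<noteq> {}"
    proof -
      obtain d where d: "phi s (proj s d q) \<notin> P" using nq q by (auto simp: Gr_def)
      have "d \<in> degs s q"
      proof (rule ccontr)
        assume "d \<notin> degs s q"
        then have "proj s d q = 0" by (rule proj_notin)
        then show False using d ideal_in_zero[OF Pid] by simp
      qed
      then show ?thesis using d B2_def by blast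
    qed
    have fB1: "finite B1" and fB2: "finite B2" by (simp_all add: B1_def B2_def)
    define b1 where "b1 = Max B1"
    define b2 where "b2 = Max B2"
    have b1: "b1 \<in> B1" unfolding b1_def using fB1 B1ne by (rule Max_in)
    have b2: "b2 \<in> B2" unfolding b2_def using fB2 B2ne by (rule Max_in)
    have big1: "phi s (proj s d p) \<in> P" if "d \<in> degs s p" "b1 < d" for d
    proof (rule ccontr)
      assume "phi s (proj s d p) \<notin> P"
      then have "d \<in> B1" using that B1_def by blast
      then have "d \<le> b1" unfolding b1_def using fB1 by simp
      then show False using that(2) by simp
    qed
    have big2: "phi s (proj s d q) \<in> P" if "d \<in> degs s q" "b2 < d" for d
    proof (rule ccontr)
      assume "phi s (proj s d q) \<notin> P"
      then have "d \<in> B2" using that B2_def by blast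
      then have "d \<le> b2" unfolding b2_def using fB2 by simp
      then show False using that(2) by simp
    qed
    define g where "g = (\<lambda>(d1, d2). if d1 + d2 = b1 + b2 then phi s (proj s d1 p) * phi s (proj s d2 q) else 0)"
    have X: "phi s (proj s (b1 + b2) (p * q)) \<in> P" using pq by (simp add: Gr_def)
    have "phi s (proj s (b1 + b2) (p * q)) = (\<Sum>x\<in>degs s p \<times> degs s q. g x)"
      unfolding phi_proj_mult g_def by (simp add: sum.cartesian_product)
    also have "\<dots> = g (b1, b2) + (\<Sum>x\<in>(degs s p \<times> degs s q) - {(b1, b2)}. g x)"
      using b1 b2 by (intro sum.remove) (auto simp: B1_def B2_def)
    finally have X2: "g (b1, b2) + (\<Sum>x\<in>(degs s p \<times> degs s q) - {(b1, b2)}. g x) \<in> P"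
      using X by simp
    have rest: "(\<Sum>x\<in>(degs s p \<times> degs s q) - {(b1, b2)}. g x) \<in> P"
    proof (rule ideal_in_sum[OF Pid])
      fix x assume x: "x \<in> (degs s p \<times> degs s q) - {(b1, b2)}"
      obtain d1 d2 where x12: "x = (d1, d2)" by (cases x)
      have d1: "d1 \<in> degs s p" and d2: "d2 \<in> degs s q" and ne12: "(d1, d2) \<noteq> (b1, b2)"
        using x x12 by auto
      show "g x \<in> P"
      proof (cases "d1 + d2 = b1 + b2")
        case False then show ?thesis using ideal_in_zero[OF Pid] by (simp add: g_def x12)
      next
        case True
        have "phi s (proj s d1 p) * phi s (proj s d2 q) \<in> P"
        proof (cases rule: linorder_cases[of d1 b1])
          case less
          have "b2 < d2"
          proof (rule ccontr)
            assume "\<not> b2 < d2"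
            then have "d2 \<le> b2" by simp
            then have "d1 + d2 < b1 + b2" using less by (intro add_less_le_mono)
            then show False using True by simp
          qed
          then have "phi s (proj s d2 q) \<in> P" using big2 d2 by blast
          then show ?thesis using ideal_in_mult[OF Pid phi_in] by blast
        next
          case equal
          then have "d2 = b2" using True by simp
          then show ?thesis using equal ne12 by simp
        next
          case greater
          then have "phi s (proj s d1 p) \<in> P" using big1 d1 by blast
          then show ?thesis using ideal_in_mult2[OF Pid phi_in] by blast
        qed
        then show ?thesis using True by (simp add: g_def x12)
      qed
    qed
    have "g (b1, b2) \<in> P" by (rule ideal_in_cancel[OF subS1 Pid X2 rest])
    then have "phi s (proj s b1 p) * phi s (proj s b2 q) \<in> P" by (simp add: g_def)
    then have "phi s (proj s b1 p) \<in> P \<or> phi s (proj s b2 q) \<in> P"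
      using P phi_in unfolding prime_ideal_in_def by blast
    then show False using b1 b2 by (auto simp: B1_def B2_def)
  qed
  show ?thesis unfolding prime_ideal_in_def using Gr_ideal[OF Pid] ne pr by blast
qed

lemma proj_low_right: "r \<in> S1 \<Longrightarrow> phi s (proj s d (G * r)) = phi s (proj s d G) * r"
proof -
  assume r: "r \<in> S1"
  have "proj s (d + 0) (G * r) = proj s d G * r"
    by (rule proj_shift) (rule low_hi0[OF r])
  then show ?thesis by (simp add: phi_mult phi_low[OF r])
qed

lemma Q_colon:
  assumes P: "prime_ideal_in S1 P" and f: "f \<in> S1"
    and Pc: "P = colon S1 (ideal_pow S1 I (Suc k)) f"
  shows "Gr P = colon S (ideal_pow S L (Suc k)) (f * w ^ Suc k)"
proof (rule set_eqI)
  fix r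
  show "r \<in> Gr P \<longleftrightarrow> r \<in> colon S (ideal_pow S L (Suc k)) (f * w ^ Suc k)"
  proof (cases "r \<in> S")
    case False then show ?thesis by (simp add: Gr_def colon_def)
  next
    case True
    have fS: "f \<in> S" using f S1_sub by blast
    have rf: "r * f \<in> S" using True fS subS by (simp add: subring_def)
    have "r \<in> colon S (ideal_pow S L (Suc k)) (f * w ^ Suc k) \<longleftrightarrow> (r * f) * w ^ Suc k \<in> ideal_pow S L (Suc k)"
      using True by (simp add: colon_def mult.assoc)
    also have "\<dots> \<longleftrightarrow> (\<forall>d. phi s (proj s d (r * f)) \<in> ideal_pow S1 I (Suc k))"
      by (rule K[OF rf])
    also have "\<dots> \<longleftrightarrow> (\<forall>d. phi s (proj s d r) \<in> P)"
    proof -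
      have e: "\<And>d. phi s (proj s d (r * f)) = phi s (proj s d r) * f" by (rule proj_low_right[OF f])
      have m: "\<And>d. phi s (proj s d r) \<in> S1" by (rule phi_in)
      show ?thesis unfolding Pc colon_def e using m by blast
    qed
    finally show ?thesis using True by (simp add: Gr_def)
  qed
qed

lemma not_Ass:
  assumes P: "prime_ideal_in S1 P" and GA: "Gr P \<in> Ass S (ideal_pow S L k)"
  shows "P \<in> Ass S1 (ideal_pow S1 I k)"
proof -
  obtain G where G: "G \<in> S" and GP: "Gr P = colon S (ideal_pow S L k) G"
    using GA unfolding Ass_def by blast
  have Pid: "ideal_in S1 P" using P by (simp add: prime_ideal_in_def)
  have GPp: "prime_ideal_in S (Gr P)" by (rule Gr_prime[OF P])
  obtain c where c: "w ^ k = Poly_Mapping.single c 1" "Poly_Mapping.keys c \<subseteq> {s..<n}"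
    using wpow by blast
  have yS: "w ^ k \<in> S" by (rule wpow_in)
  have "proj s c (w ^ k) = w ^ k" unfolding c(1)
    by (rule proj_homog1) (simp add: hi_high[OF c(2)])
  moreover have "phi s (w ^ k) = 1" unfolding c(1) using c(2) by (rule phi_single_high)
  ultimately have "phi s (proj s c (w ^ k)) \<notin> P" using prime_one[OF subS1 P] by simp
  then have ynot: "w ^ k \<notin> Gr P" by (auto simp: Gr_def)
  define g where "g d = phi s (proj s d G)" for d
  have IkI: "ideal_in S1 (ideal_pow S1 I k)" by (rule ideal_pow_ideal[OF subS1 I_ideal])
  have Peq: "P = {r \<in> S1. \<forall>d\<in>degs s G. r \<in> colon S1 (ideal_pow S1 I k) (g d)}"
  proof (rule set_eqI)
    fix r
    show "r \<in> P \<longleftrightarrow> r \<in> {r \<in> S1. \<forall>d\<in>degs s G. r \<in> colon S1 (ideal_pow S1 I k) (g d)}"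
    proof (cases "r \<in> S1")
      case False then show ?thesis using Pid ideal_in_subset by blast
    next
      case True
      have rS: "r \<in> S" using True S1_sub by blast
      have rG: "r * G \<in> S" using rS G subS by (simp add: subring_def)
      have key: "phi s (proj s d (r * G)) = r * g d" for d
        using proj_low_right[OF True, of d G] by (simp add: g_def mult.commute)
      have "r \<in> P \<longleftrightarrow> r \<in> Gr P"
        using True rS phi_proj_low[OF True] ideal_in_zero[OF Pid] by (auto simp: Gr_def)
      also have "\<dots> \<longleftrightarrow> (r * G) * w ^ k \<in> ideal_pow S L k"
      proof
        assume "r \<in> Gr P"
        then have "r * G \<in> ideal_pow S L k" using GP by (simp add: colon_def)
        then show "(r * G) * w ^ k \<in> ideal_pow S L k"
          using ideal_in_mult2[OF ideal_pow_ideal[OF subS L_ideal] yS] by blast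
      next
        assume h: "(r * G) * w ^ k \<in> ideal_pow S L k"
        have ry: "r * w ^ k \<in> S" using rS yS subS by (simp add: subring_def)
        have "(r * w ^ k) * G \<in> ideal_pow S L k" using h by (simp add: algebra_simps)
        then have "r * w ^ k \<in> Gr P" using GP ry by (simp add: colon_def)
        then show "r \<in> Gr P" using GPp rS yS ynot unfolding prime_ideal_in_def by blast
      qed
      also have "\<dots> \<longleftrightarrow> (\<forall>d. r * g d \<in> ideal_pow S1 I k)"
        using K[OF rG, of k] key by simp
      also have "\<dots> \<longleftrightarrow> (\<forall>d\<in>degs s G. r * g d \<in> ideal_pow S1 I k)"
      proof
        assume "\<forall>d\<in>degs s G. r * g d \<in> ideal_pow S1 I k"
        moreover have "r * g d \<in> ideal_pow S1 I k" if "d \<notin> degs s G" for d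
          using that ideal_in_zero[OF IkI] by (simp add: g_def proj_notin del: ideal_pow.simps)
        ultimately show "\<forall>d. r * g d \<in> ideal_pow S1 I k" by blast
      qed simp
      finally show ?thesis using True by (simp add: colon_def del: ideal_pow.simps)
    qed
  qed
  have "\<exists>d\<in>degs s G. P = colon S1 (ideal_pow S1 I k) (g d)"
    by (rule prime_inter[OF subS1 P finite_degs colon_ideal[OF subS1 IkI] Peq])
  then obtain d where "P = colon S1 (ideal_pow S1 I k) (g d)" by blast
  moreover have "g d \<in> S1" by (simp add: g_def phi_in)
  ultimately show ?thesis using P unfolding Ass_def by blast
qed

end

lemma zero_ideal: "0 \<in> R \<Longrightarrow> ideal_in R {0::'a::comm_ring_1}"
  by (simp add: ideal_in_def)

theorem corollary3p21:
  fixes s n m :: nat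
    and I :: "('a::field) mpoly set"
    and u :: "nat \<Rightarrow> (nat \<Rightarrow>\<^sub>0 nat)"
    and J :: "nat \<Rightarrow> 'a mpoly set"
  assumes "s \<le> n"
    and "inj_on u {..<m}"
    and "min_monomial_gens {..<s} I (u ` {..<m})"
    and "\<forall>i<m. monomial_ideal {s..<n} (J i) \<and> J i \<noteq> {0}"
    and "\<not> copersistent (polyring {..<s}) I"
  shows "\<not> copersistent (polyring {..<n})
           (gen_ideal (polyring {..<n}) (\<Union>i<m. {mmonom (u i) * g | g. g \<in> J i}))"
proof -
  have ukeys: "\<And>i. i < m \<Longrightarrow> Poly_Mapping.keys (u i) \<subseteq> {..<s}"
    using assms(3) unfolding min_monomial_gens_def by blast
  have Idef: "I = gen_ideal (polyring {..<s}) (mmonom ` u ` {..<m})"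
    using assms(3) unfolding min_monomial_gens_def by blast
  have Jp: "\<exists>e. Poly_Mapping.keys e \<subseteq> {s..<n} \<and> mmonom e \<in> J i \<and> J i \<subseteq> polyring {s..<n}"
    if i: "i < m" for i
  proof -
    have mi: "monomial_ideal {s..<n} (J i)" and J0: "J i \<noteq> {0}" using assms(4) i by auto
    obtain E where E: "\<forall>e\<in>E. Poly_Mapping.keys e \<subseteq> {s..<n}"
      and JE: "J i = gen_ideal (polyring {s..<n}) (mmonom ` E)"
      using mi unfolding monomial_ideal_def by blast
    have sub: "mmonom ` E \<subseteq> (polyring {s..<n} :: 'a mpoly set)"
      using E unfolding mmonom_def by (auto intro: single_in)
    have Jid: "ideal_in (polyring {s..<n}) (J i)"
      unfolding JE by (rule gen_ideal_ideal[OF subring_polyring sub])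
    have JS: "J i \<subseteq> polyring {s..<n}" by (rule ideal_in_subset[OF Jid])
    have "E \<noteq> {}"
    proof
      assume "E = {}"
      then have "J i \<subseteq> {0}" unfolding JE
        by (intro gen_ideal_least zero_ideal) (simp_all add: polyring_def)
      moreover have "0 \<in> J i" by (rule ideal_in_zero[OF Jid])
      ultimately show False using J0 by blast
    qed
    then obtain e where e: "e \<in> E" by blast
    have "mmonom e \<in> mmonom ` E" using e by blast
    then have "mmonom e \<in> J i" unfolding JE by (rule subsetD[OF gen_ideal_gens])
    then show ?thesis using E e JS by blast
  qed
  then have "\<forall>i\<in>{..<m}. \<exists>e. Poly_Mapping.keys e \<subseteq> {s..<n} \<and> mmonom e \<in> J i \<and> J i \<subseteq> polyring {s..<n}"
    by blast
  from bchoice[OF this] obtain ee where ee: "\<forall>i\<in>{..<m}. Poly_Mapping.keys (ee i) \<subseteq> {s..<n}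
     \<and> (mmonom (ee i) :: 'a mpoly) \<in> J i \<and> J i \<subseteq> polyring {s..<n}" by blast
  interpret c: cp s n m u J ee
    by unfold_locales (use assms(1) ukeys ee in auto)
  have Ieq: "I = c.I" by (simp add: c.I_def Idef)
  have Leq: "gen_ideal (polyring {..<n}) (\<Union>i<m. {mmonom (u i) * g | g. g \<in> J i}) = c.L"
    by (simp add: c.L_def c.Gen_def)
  from assms(5) obtain k P where k: "k \<ge> 1"
    and PA: "P \<in> Ass (polyring {..<s}) (ideal_pow (polyring {..<s}) c.I (Suc k))"
    and PnA: "P \<notin> Ass (polyring {..<s}) (ideal_pow (polyring {..<s}) c.I k)"
    unfolding copersistent_def Ieq by blast
  obtain f where P: "prime_ideal_in (polyring {..<s}) P" and f: "f \<in> polyring {..<s}"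
    and Pc: "P = colon (polyring {..<s}) (ideal_pow (polyring {..<s}) c.I (Suc k)) f"
    using PA unfolding Ass_def by blast
  have QP: "prime_ideal_in (polyring {..<n}) (c.Gr P)" by (rule c.Gr_prime[OF P])
  have Qc: "c.Gr P = colon (polyring {..<n}) (ideal_pow (polyring {..<n}) c.L (Suc k)) (f * c.w ^ Suc k)"
    by (rule c.Q_colon[OF P f Pc])
  have FS: "f * c.w ^ Suc k \<in> polyring {..<n}"
    using f c.S1_sub c.wpow_in[of "Suc k"] c.subS by (simp add: subring_def subset_iff)
  have "c.Gr P \<in> Ass (polyring {..<n}) (ideal_pow (polyring {..<n}) c.L (Suc k))"
    unfolding Ass_def using QP Qc FS by blast
  moreover have "c.Gr P \<notin> Ass (polyring {..<n}) (ideal_pow (polyring {..<n}) c.L k)"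
    using c.not_Ass[OF P] PnA by blast
  ultimately show ?thesis unfolding Leq copersistent_def using k by blast
qed

end
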